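(* Consider the deterministic split-node max-neighbour algorithm described in the context, on a dynamic graph $(G_r)_{r\ge1}$ with node set $V$. For every round $r\ge1$, \[ \phi(V,w_r)\le\phi(V,w_{r-1})-D_r/2 . \]
   Context: Setting: a fixed set $V$ of $n$ nodes, a sequence of connected graphs $G_r=(V,E_r)$ ($r\ge1$), $N_r(v)$ the neighbours of $v$ in $G_r$, non-negative real loads $w_0(v)$, and $w_r(v)$ the load of $v$ at the end of round $r$. For a finite set $U$ and $w:U\to\mathbb{R}_{\ge0}$ define $\phi(U,w)=\sum_{\{u,v\}\subseteq U}|w(u)-w(v)|$ (sum over unordered pairs of distinct elements). Algorithm: each node $v$ is split into two virtual nodes $v_s$ (sender) and $v_a$ (receiver). In round $r$: set $w_r^1(v_s)=w_r^1(v_a)=w_{r-1}(v)/2$. Each $v_s$ sends a proposal to $u_a$ where $u\in N_r(v)$ maximizes $|w_{r-1}(u)-w_{r-1}(v)|$ (ties broken by a fixed deterministic rule). Each $v_a$ that received proposals accepts exactly one, from $u_s$ with $u$ maximizing $|w_{r-1}(u)-w_{r-1}(v)|$ among proposers (deterministic tie-breaking). For each accepted pair $(u_s,v_a)$, set $w_r^2(u_s)=w_r^2(v_a)=(w_r^1(u_s)+w_r^1(v_a))/2$; other virtual nodes keep their value. Then $w_r(v)=w_r^2(v_s)+w_r^2(v_a)$. An ordered pair $(u,v)$ connects at round $r$ if $u_s$'s proposal to $v_a$ was accepted in round $r$; $A_r$ is the set of ordered pairs that connect at round $r$, and \[ D_r=\frac12\sum_{(u,v)\in A_r}|w_{r-1}(u)-w_{r-1}(v)|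 . \] *)

theory Defs
  imports Complex_Main
begin

definition pair_diff :: "('a \<Rightarrow> real) \<Rightarrow> 'a set \<Rightarrow> real" where
  "pair_diff w P = (THE d. \<exists>u v. P = {u, v} \<and> d = \<bar>w u - w v\<bar>)"

definition phi :: "'a set \<Rightarrow> ('a \<Rightarrow> real) \<Rightarrow> real" where
  "phi U w = (\<Sum>P \<in> {P. P \<subseteq> U \<and> card P = 2}. pair_diff w P)"

definition connected_graph :: "'a set \<Rightarrow> ('a \<Rightarrow> 'a set) \<Rightarrow> bool" where
  "connected_graph V N \<longleftrightarrow>
     (\<forall>v\<in>V. N v \<subseteq> V \<and> v \<notin> N v) \<and>
     (\<forall>u\<in>V. \<forall>v\<in>V. u \<in> N v \<longleftrightarrow> v \<in> N u) \<and>
     (\<forall>u\<in>V. \<forall>v\<in>V. (u, v) \<in> {(a, b). a \<in> V \<and> b \<in> N a}\<^sup>*)"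

(* One round. p v = Some u: v_s proposes to u_a; a v = Some u: v_a accepts the proposal of u_s. *)
definition round_step ::
  "('a \<Rightarrow> 'a option) \<Rightarrow> ('a \<Rightarrow> 'a option) \<Rightarrow> ('a \<Rightarrow> real) \<Rightarrow> ('a \<Rightarrow> real)" where
  "round_step p a w = (\<lambda>v.
     let w1s = w v / 2; w1a = w v / 2;
         w2s = (case p v of
                  Some u \<Rightarrow> (if a u = Some v then (w1s + w u / 2) / 2 else w1s)
                | None \<Rightarrow> w1s);
         w2a = (case a v of
                  Some u \<Rightarrow> (w u / 2 + w1a) / 2
                | None \<Rightarrow> w1a)
     in w2s + w2a)"

primrec load ::
  "(nat \<Rightarrow> 'a \<Rightarrow> 'a option) \<Rightarrow> (nat \<Rightarrow> 'a \<Rightarrow> 'a option) \<Rightarrow> ('a \<Rightarrow> real) \<Rightarrow> nat \<Rightarrow> 'a \<Rightarrow> real" where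
  "load p a w0 0 = w0"
| "load p a w0 (Suc r) = round_step (p (Suc r)) (a (Suc r)) (load p a w0 r)"

definition valid_proposals ::
  "'a set \<Rightarrow> ('a \<Rightarrow> 'a set) \<Rightarrow> ('a \<Rightarrow> real) \<Rightarrow> ('a \<Rightarrow> 'a option) \<Rightarrow> bool" where
  "valid_proposals V N w p \<longleftrightarrow>
     (\<forall>v\<in>V. (p v = None \<longleftrightarrow> N v = {}) \<and>
        (\<forall>u. p v = Some u \<longrightarrow> u \<in> N v \<and>
              (\<forall>x\<in>N v. \<bar>w x - w v\<bar> \<le> \<bar>w u - w v\<bar>)))"

definition valid_acceptances ::
  "'a set \<Rightarrow> ('a \<Rightarrow> real) \<Rightarrow> ('a \<Rightarrow> 'a option) \<Rightarrow> ('a \<Rightarrow> 'a option) \<Rightarrow> bool" where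
  "valid_acceptances V w p a \<longleftrightarrow>
     (\<forall>v\<in>V. (a v = None \<longleftrightarrow> (\<forall>u\<in>V. p u \<noteq> Some v)) \<and>
        (\<forall>u. a v = Some u \<longrightarrow> u \<in> V \<and> p u = Some v \<and>
              (\<forall>x\<in>V. p x = Some v \<longrightarrow> \<bar>w x - w v\<bar> \<le> \<bar>w u - w v\<bar>)))"

definition connects :: "'a set \<Rightarrow> ('a \<Rightarrow> 'a option) \<Rightarrow> ('a \<times> 'a) set" where
  "connects V a = {(u, v). u \<in> V \<and> v \<in> V \<and> a v = Some u}"

definition Dval :: "'a set \<Rightarrow> ('a \<Rightarrow> real) \<Rightarrow> ('a \<Rightarrow> 'a option) \<Rightarrow> real" where
  "Dval V w a = (1/2) * (\<Sum>(u, v) \<in> connects V a. \<bar>w u - w v\<bar>)"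

end

theory Submission imports Defs begin

lemma sum_X: "(\<Sum>i\<in>V\<times>(UNIV::bool set). k i) = (\<Sum>v\<in>V. k (v,True) + k (v,False))"
  by (simp add: sum.cartesian_product' UNIV_bool add.commute)

lemma pair_diff_eq: "pair_diff w {u,v} = \<bar>w u - w v\<bar>"
  unfolding pair_diff_def
  by (rule the_equality) (auto simp: doubleton_eq_iff abs_minus_commute)

lemma phi_SS:
  assumes "finite V"
  shows "phi V w = (1/2) * (\<Sum>u\<in>V. \<Sum>v\<in>V. \<bar>w u - w v\<bar>)"
proof -
  let ?S = "{x \<in> V \<times> V. fst x \<noteq> snd x}"
  let ?g = "\<lambda>x. \<bar>w (fst x) - w (snd x)\<bar>"
  let ?h = "\<lambda>x. {fst x, snd x}"
  have fS: "finite ?S" using assms by auto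
  have "(\<Sum>u\<in>V. \<Sum>v\<in>V. \<bar>w u - w v\<bar>) = (\<Sum>x\<in>V\<times>V. ?g x)"
    by (simp add: sum.cartesian_product')
  also have "\<dots> = (\<Sum>x\<in>?S. ?g x)"
    by (rule sum.mono_neutral_right) (auto simp: assms)
  also have "\<dots> = (\<Sum>P\<in>?h ` ?S. sum ?g {x\<in>?S. ?h x = P})"
    by (rule sum.image_gen[OF fS])
  also have "?h ` ?S = {P. P \<subseteq> V \<and> card P = 2}"
  proof (rule set_eqI, rule iffI)
    fix P assume "P \<in> ?h ` ?S" then show "P \<in> {P. P \<subseteq> V \<and> card P = 2}" by auto
  next
    fix P assume "P \<in> {P. P \<subseteq> V \<and> card P = 2}"
    then obtain u v where "P = {u,v}" "u \<noteq> v" "P \<subseteq> V" by (auto simp: card_2_iff)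
    then show "P \<in> ?h ` ?S" by (auto intro!: image_eqI[where x="(u,v)"])
  qed
  also have "(\<Sum>P\<in>{P. P \<subseteq> V \<and> card P = 2}. sum ?g {x\<in>?S. ?h x = P})
      = (\<Sum>P\<in>{P. P \<subseteq> V \<and> card P = 2}. 2 * pair_diff w P)"
  proof (rule sum.cong[OF refl])
    fix P assume "P \<in> {P. P \<subseteq> V \<and> card P = 2}"
    then obtain u v where P: "P = {u,v}" "u \<noteq> v" "P \<subseteq> V" by (auto simp: card_2_iff)
    have "{x\<in>?S. ?h x = P} = {(u,v),(v,u)}" using P by (auto simp: doubleton_eq_iff)
    then show "sum ?g {x\<in>?S. ?h x = P} = 2 * pair_diff w P"
      using P by (simp add: pair_diff_eq abs_minus_commute)
  qed
  finally show ?thesis unfolding phi_def by (simp add: sum_distrib_left)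
qed

lemma four_ineq:
  fixes A B C D :: real
  shows "\<bar>(A + B)/2 - (C + D)/2\<bar> \<le> (1/4) * (\<bar>A - C\<bar> + \<bar>A - D\<bar> + \<bar>B - C\<bar> + \<bar>B - D\<bar>)"
proof -
  have e1: "(A + B)/2 - (C + D)/2 = ((A - C) + (B - D))/2" by (simp add: field_simps)
  have e2: "(A + B)/2 - (C + D)/2 = ((A - D) + (B - C))/2" by (simp add: field_simps)
  define t where "t = \<bar>(A + B)/2 - (C + D)/2\<bar>"
  have h1: "2 * t \<le> \<bar>A - C\<bar> + \<bar>B - D\<bar>"
    unfolding t_def e1 using abs_triangle_ineq[of "A - C" "B - D"] by simp
  have h2: "2 * t \<le> \<bar>A - D\<bar> + \<bar>B - C\<bar>"
    unfolding t_def e2 using abs_triangle_ineq[of "A - D" "B - C"] by simp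
  have "4 * t \<le> \<bar>A - C\<bar> + \<bar>A - D\<bar> + \<bar>B - C\<bar> + \<bar>B - D\<bar>"
    using add_mono[OF h1 h2] by (simp add: algebra_simps)
  then show ?thesis unfolding t_def[symmetric] by simp
qed

lemma avg_ineq:
  fixes X :: "'b set" and s :: "'b \<Rightarrow> 'b" and x0 :: "'b \<Rightarrow> real"
  assumes fX: "finite X" and inv: "\<And>i. i \<in> X \<Longrightarrow> s i \<in> X \<and> s (s i) = i"
  shows "(\<Sum>i\<in>X. \<Sum>j\<in>X. \<bar>(x0 i + x0 (s i))/2 - (x0 j + x0 (s j))/2\<bar>)
         + (\<Sum>i\<in>X. \<bar>x0 i - x0 (s i)\<bar>) \<le> (\<Sum>i\<in>X. \<Sum>j\<in>X. \<bar>x0 i - x0 j\<bar>)"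
proof -
  define x where "x i = (x0 i + x0 (s i))/2" for i
  define d where "d i = \<bar>x0 i - x0 (s i)\<bar>" for i
  define b where "b i j = (1/4) * (\<bar>x0 i - x0 j\<bar> + \<bar>x0 i - x0 (s j)\<bar> + \<bar>x0 (s i) - x0 j\<bar>
      + \<bar>x0 (s i) - x0 (s j)\<bar>)" for i j
  have bij: "bij_betw s X X"
    by (rule bij_betw_byWitness[where f'=s]) (auto simp: inv)
  have re: "(\<Sum>j\<in>X. f (s j)) = (\<Sum>j\<in>X. f j)" for f :: "'b \<Rightarrow> real"
    using sum.reindex_bij_betw[OF bij, of f] by simp
  have Q: "(\<Sum>i\<in>X. \<Sum>j\<in>X. b i j) = (\<Sum>i\<in>X. \<Sum>j\<in>X. \<bar>x0 i - x0 j\<bar>)"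
  proof -
    have "(\<Sum>i\<in>X. \<Sum>j\<in>X. b i j) = (1/4) * ((\<Sum>i\<in>X. \<Sum>j\<in>X. \<bar>x0 i - x0 j\<bar>)
       + (\<Sum>i\<in>X. \<Sum>j\<in>X. \<bar>x0 i - x0 (s j)\<bar>) + (\<Sum>i\<in>X. \<Sum>j\<in>X. \<bar>x0 (s i) - x0 j\<bar>)
       + (\<Sum>i\<in>X. \<Sum>j\<in>X. \<bar>x0 (s i) - x0 (s j)\<bar>))"
      unfolding b_def by (simp add: sum.distrib sum_distrib_left ring_distribs)
    also have "(\<Sum>i\<in>X. \<Sum>j\<in>X. \<bar>x0 i - x0 (s j)\<bar>) = (\<Sum>i\<in>X. \<Sum>j\<in>X. \<bar>x0 i - x0 j\<bar>)"
      by (rule sum.cong[OF refl]) (rule re[of "\<lambda>j. \<bar>x0 _ - x0 j\<bar>"])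
    also have "(\<Sum>i\<in>X. \<Sum>j\<in>X. \<bar>x0 (s i) - x0 j\<bar>) = (\<Sum>i\<in>X. \<Sum>j\<in>X. \<bar>x0 i - x0 j\<bar>)"
      by (rule re[of "\<lambda>i. \<Sum>j\<in>X. \<bar>x0 i - x0 j\<bar>"])
    also have "(\<Sum>i\<in>X. \<Sum>j\<in>X. \<bar>x0 (s i) - x0 (s j)\<bar>) = (\<Sum>i\<in>X. \<Sum>j\<in>X. \<bar>x0 i - x0 j\<bar>)"
    proof -
      have "(\<Sum>i\<in>X. \<Sum>j\<in>X. \<bar>x0 (s i) - x0 (s j)\<bar>) = (\<Sum>i\<in>X. \<Sum>j\<in>X. \<bar>x0 (s i) - x0 j\<bar>)"
        by (rule sum.cong[OF refl]) (rule re[of "\<lambda>j. \<bar>x0 _ - x0 j\<bar>"])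
      also have "\<dots> = (\<Sum>i\<in>X. \<Sum>j\<in>X. \<bar>x0 i - x0 j\<bar>)"
        by (rule re[of "\<lambda>i. \<Sum>j\<in>X. \<bar>x0 i - x0 j\<bar>"])
      finally show ?thesis .
    qed
    finally show ?thesis by simp
  qed
  have pw: "\<bar>x i - x j\<bar> + (if j = i then d i / 2 else 0) + (if j = s i then d i / 2 else 0) \<le> b i j"
    if "i \<in> X" "j \<in> X" for i j
  proof -
    have ssi: "s (s i) = i" using inv that by blast
    show ?thesis
    proof (cases "j = i")
      case True
      show ?thesis
      proof (cases "s i = i")
        case True2: True
        have "b i j \<ge> 0" unfolding b_def by simp
        then show ?thesis using True True2 by (simp add: x_def d_def)
      next
        case False
        have "b i j = d i / 2" using True unfolding b_def d_def
          by (simp add: abs_minus_commute[of "x0 (s i)"])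
        then show ?thesis using True False by (simp add: x_def)
      qed
    next
      case False
      show ?thesis
      proof (cases "j = s i")
        case True
        have "x j = x i" using True ssi by (simp add: x_def)
        moreover have "b i j = d i / 2" using True ssi unfolding b_def d_def
          by (simp add: abs_minus_commute[of "x0 (s i)"])
        ultimately show ?thesis using True False by simp
      next
        case False2: False
        have "\<bar>x i - x j\<bar> \<le> b i j" unfolding x_def b_def
          by (rule four_ineq)
        then show ?thesis using False False2 by simp
      qed
    qed
  qed
  have row: "(\<Sum>j\<in>X. \<bar>x i - x j\<bar>) + d i \<le> (\<Sum>j\<in>X. b i j)" if "i \<in> X" for i
  proof -
    have "(\<Sum>j\<in>X. \<bar>x i - x j\<bar> + (if j = i then d i / 2 else 0) + (if j = s i then d i / 2 else 0))
        \<le> (\<Sum>j\<in>X. b i j)"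
      by (rule sum_mono) (rule pw[OF that])
    moreover have "s i \<in> X" using inv that by blast
    ultimately show ?thesis using that fX
      by (simp add: sum.distrib sum.delta' cong: if_cong)
  qed
  have "(\<Sum>i\<in>X. (\<Sum>j\<in>X. \<bar>x i - x j\<bar>) + d i) \<le> (\<Sum>i\<in>X. \<Sum>j\<in>X. b i j)"
    by (rule sum_mono) (rule row)
  then show ?thesis using Q unfolding x_def d_def by (simp add: sum.distrib)
qed


lemma split_pt:
  fixes A B C D :: real
  shows "\<bar>(A + B) - (C + D)\<bar> \<le> (1/2) * (\<bar>A - C\<bar> + \<bar>A - D\<bar> + \<bar>B - C\<bar> + \<bar>B - D\<bar>)"
proof -
  have e1: "(A + B) - (C + D) = (A - C) + (B - D)" by simp
  have e2: "(A + B) - (C + D) = (A - D) + (B - C)" by simp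
  define t where "t = \<bar>(A + B) - (C + D)\<bar>"
  have h1: "t \<le> \<bar>A - C\<bar> + \<bar>B - D\<bar>"
    unfolding t_def e1 using abs_triangle_ineq[of "A - C" "B - D"] by simp
  have h2: "t \<le> \<bar>A - D\<bar> + \<bar>B - C\<bar>"
    unfolding t_def e2 using abs_triangle_ineq[of "A - D" "B - C"] by simp
  have "2 * t \<le> \<bar>A - C\<bar> + \<bar>A - D\<bar> + \<bar>B - C\<bar> + \<bar>B - D\<bar>"
    using add_mono[OF h1 h2] by (simp add: algebra_simps)
  then show ?thesis unfolding t_def[symmetric] by simp
qed

theorem lemma2:
  fixes V :: "'a set" and N :: "nat \<Rightarrow> 'a \<Rightarrow> 'a set" and w0 :: "'a \<Rightarrow> real"
    and p a :: "nat \<Rightarrow> 'a \<Rightarrow> 'a option" and r :: nat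
  assumes finV: "finite V"
    and graphs: "\<And>s. s \<ge> 1 \<Longrightarrow> connected_graph V (N s)"
    and nonneg: "\<And>v. v \<in> V \<Longrightarrow> w0 v \<ge> 0"
    and props: "\<And>s. s \<ge> 1 \<Longrightarrow> valid_proposals V (N s) (load p a w0 (s - 1)) (p s)"
    and accs: "\<And>s. s \<ge> 1 \<Longrightarrow> valid_acceptances V (load p a w0 (s - 1)) (p s) (a s)"
    and r: "r \<ge> 1"
  shows "phi V (load p a w0 r)
           \<le> phi V (load p a w0 (r - 1)) - Dval V (load p a w0 (r - 1)) (a r) / 2"
proof -
  obtain k where rk: "r = Suc k" using r by (cases r) auto
  define w where "w = load p a w0 k"
  define P where "P = p (Suc k)"
  define A where "A = a (Suc k)"
  have G: "connected_graph V (N (Suc k))" using graphs by simp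
  have vp: "valid_proposals V (N (Suc k)) w P" using props[of "Suc k"] by (simp add: w_def P_def)
  have va: "valid_acceptances V w P A" using accs[of "Suc k"] by (simp add: w_def P_def A_def)
  have wr: "load p a w0 r = round_step P A w" by (simp add: rk w_def P_def A_def)
  have wr1: "load p a w0 (r - 1) = w" "a r = A" by (simp_all add: rk w_def A_def)
  have Pin: "u \<in> V" if "v \<in> V" "P v = Some u" for u v
    using vp G that unfolding valid_proposals_def connected_graph_def by blast
  have Ain: "u \<in> V \<and> P u = Some v" if "v \<in> V" "A v = Some u" for u v
    using va that unfolding valid_acceptances_def by blast
  define s where "s = (\<lambda>(v, b::bool). if b then (case P v of Some u \<Rightarrow>
       if A u = Some v then (u, False) else (v, True) | None \<Rightarrow> (v, True))
     else (case A v of Some u \<Rightarrow> (u, True) | None \<Rightarrow> (v, False)))"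
  define X where "X = V \<times> (UNIV :: bool set)"
  define x0 :: "'a \<times> bool \<Rightarrow> real" where "x0 = (\<lambda>i. w (fst i) / 2)"
  define x where "x i = (x0 i + x0 (s i)) / 2" for i
  have fX: "finite X" using finV by (simp add: X_def)
  have inv: "s i \<in> X \<and> s (s i) = i \<and> (s i = i \<or> snd (s i) \<noteq> snd i)" if iX: "i \<in> X" for i
  proof -
    obtain v b where i: "i = (v, b)" "v \<in> V" using iX unfolding X_def by (cases i) auto
    show ?thesis
    proof (cases b)
      case True
      show ?thesis
      proof (cases "P v")
        case None
        then show ?thesis using i True by (simp add: s_def X_def)
      next
        case (Some u)
        have uV: "u \<in> V" using Pin[OF i(2) Some] .
        show ?thesis
        proof (cases "A u = Some v")
          case True2: True
          have "s i = (u, False)" using i True Some True2 by (simp add: s_def)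
          moreover have "s (u, False) = (v, True)" using True2 by (simp add: s_def)
          ultimately show ?thesis using i True uV by (simp add: X_def)
        next
          case False
          have "s i = i" using i True Some False by (simp add: s_def)
          then show ?thesis using iX by simp
        qed
      qed
    next
      case False
      show ?thesis
      proof (cases "A v")
        case None
        then show ?thesis using i False by (simp add: s_def X_def)
      next
        case (Some u)
        have uV: "u \<in> V" "P u = Some v" using Ain[OF i(2) Some] by auto
        have "s i = (u, True)" using i False Some by (simp add: s_def)
        moreover have "s (u, True) = (v, False)" using uV Some by (simp add: s_def)
        ultimately show ?thesis using i False uV by (simp add: X_def)
      qed
    qed
  qed
  have bij: "bij_betw s X X"
    by (rule bij_betw_byWitness[where f'=s]) (auto simp: inv)
  have re: "(\<Sum>j\<in>X. f (s j)) = (\<Sum>j\<in>X. f j)" for f :: "'a \<times> bool \<Rightarrow> real"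
    using sum.reindex_bij_betw[OF bij, of f] by simp
  have inv': "\<And>i. i \<in> X \<Longrightarrow> s i \<in> X \<and> s (s i) = i" using inv by blast
  have rs: "round_step P A w v = x (v, True) + x (v, False)" for v
    unfolding round_step_def x_def x0_def s_def
    by (auto simp: Let_def field_simps split: option.split)
  have step1: "(\<Sum>u\<in>V. \<Sum>v\<in>V. \<bar>round_step P A w u - round_step P A w v\<bar>)
      \<le> (1/2) * (\<Sum>i\<in>X. \<Sum>j\<in>X. \<bar>x i - x j\<bar>)"
  proof -
    have "(\<Sum>i\<in>X. \<Sum>j\<in>X. \<bar>x i - x j\<bar>) = (\<Sum>u\<in>V. \<Sum>v\<in>V.
        \<bar>x (u,True) - x (v,True)\<bar> + \<bar>x (u,True) - x (v,False)\<bar>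
      + \<bar>x (u,False) - x (v,True)\<bar> + \<bar>x (u,False) - x (v,False)\<bar>)"
      unfolding X_def by (simp only: sum_X) (simp add: sum.distrib add_ac)
    moreover have "(\<Sum>u\<in>V. \<Sum>v\<in>V. \<bar>round_step P A w u - round_step P A w v\<bar>)
      \<le> (\<Sum>u\<in>V. \<Sum>v\<in>V. (1/2) * (
        \<bar>x (u,True) - x (v,True)\<bar> + \<bar>x (u,True) - x (v,False)\<bar>
      + \<bar>x (u,False) - x (v,True)\<bar> + \<bar>x (u,False) - x (v,False)\<bar>))"
      unfolding rs by (intro sum_mono) (rule split_pt)
    ultimately show ?thesis by (simp add: sum_distrib_left)
  qed
  define d where "d i = \<bar>x0 i - x0 (s i)\<bar>" for i
  have step2: "(\<Sum>i\<in>X. \<Sum>j\<in>X. \<bar>x i - x j\<bar>) + (\<Sum>i\<in>X. d i)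
      \<le> (\<Sum>i\<in>X. \<Sum>j\<in>X. \<bar>x0 i - x0 j\<bar>)"
    using avg_ineq[OF fX inv', of x0] unfolding x_def d_def .
  have h: "\<bar>x0 i - x0 j\<bar> = \<bar>w (fst i) - w (fst j)\<bar> / 2" for i j
  proof -
    have "x0 i - x0 j = (w (fst i) - w (fst j)) / 2" by (simp add: x0_def diff_divide_distrib)
    then have "\<bar>x0 i - x0 j\<bar> = \<bar>(w (fst i) - w (fst j)) / 2\<bar>" by (rule arg_cong)
    also have "\<dots> = \<bar>w (fst i) - w (fst j)\<bar> / 2" by simp
    finally show ?thesis .
  qed
  have step3: "(\<Sum>i\<in>X. \<Sum>j\<in>X. \<bar>x0 i - x0 j\<bar>) = 2 * (\<Sum>u\<in>V. \<Sum>v\<in>V. \<bar>w u - w v\<bar>)"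
  proof -
    have "(\<Sum>i\<in>X. \<Sum>j\<in>X. \<bar>x0 i - x0 j\<bar>) = (\<Sum>u\<in>V. \<Sum>v\<in>V. 2 * \<bar>w u - w v\<bar>)"
      unfolding h X_def by (simp only: sum_X) (simp add: sum.distrib[symmetric])
    then show ?thesis by (simp add: sum_distrib_left)
  qed
  define e where "e i = (if snd i then 0 else d i)" for i
  have de: "d i = e i + e (s i)" if iX: "i \<in> X" for i
  proof -
    have ss: "s (s i) = i" and alt: "s i = i \<or> snd (s i) \<noteq> snd i" using inv[OF iX] by auto
    have dsym: "d (s i) = d i" unfolding d_def ss by (simp add: abs_minus_commute)
    show ?thesis
    proof (cases "s i = i")
      case True
      then have "d i = 0" by (simp add: d_def)
      then show ?thesis using True by (simp add: e_def)
    next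
      case False
      then have "snd (s i) \<noteq> snd i" using alt by blast
      then show ?thesis using dsym by (cases "snd i") (auto simp: e_def)
    qed
  qed
  have sumd: "(\<Sum>i\<in>X. d i) = 2 * (\<Sum>i\<in>X. e i)"
  proof -
    have "(\<Sum>i\<in>X. d i) = (\<Sum>i\<in>X. e i + e (s i))" by (rule sum.cong[OF refl]) (rule de)
    also have "\<dots> = (\<Sum>i\<in>X. e i) + (\<Sum>i\<in>X. e (s i))" by (rule sum.distrib)
    also have "(\<Sum>i\<in>X. e (s i)) = (\<Sum>i\<in>X. e i)" by (rule re)
    finally show ?thesis by simp
  qed
  define V' where "V' = {v \<in> V. A v \<noteq> None}"
  have fV': "finite V'" using finV by (simp add: V'_def)
  have sume: "(\<Sum>i\<in>X. e i) = (\<Sum>v\<in>V'. \<bar>w (the (A v)) - w v\<bar> / 2)"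
  proof -
    have "(\<Sum>i\<in>X. e i) = (\<Sum>v\<in>V. d (v, False))"
      unfolding X_def by (simp add: sum_X e_def)
    also have "\<dots> = (\<Sum>v\<in>V'. d (v, False))"
      by (rule sum.mono_neutral_left[symmetric, OF finV]) (auto simp: V'_def d_def s_def)
    also have "\<dots> = (\<Sum>v\<in>V'. \<bar>w (the (A v)) - w v\<bar> / 2)"
    proof (rule sum.cong[OF refl])
      fix v assume "v \<in> V'"
      then obtain u where "A v = Some u" by (auto simp: V'_def)
      then have "d (v, False) = \<bar>w v / 2 - w u / 2\<bar>" by (simp add: d_def s_def x0_def)
      also have "\<dots> = \<bar>w u - w v\<bar> / 2" using h[of "(v,False)" "(u,True)"]
        by (simp add: x0_def abs_minus_commute)
      finally show "d (v, False) = \<bar>w (the (A v)) - w v\<bar> / 2" using \<open>A v = Some u\<close> by simp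
    qed
    finally show ?thesis .
  qed
  have conn: "connects V A = (\<lambda>v. (the (A v), v)) ` V'"
  proof (rule set_eqI, rule iffI)
    fix z assume "z \<in> connects V A"
    then obtain u v where z: "z = (u, v)" "u \<in> V" "v \<in> V" "A v = Some u" by (auto simp: connects_def)
    then show "z \<in> (\<lambda>v. (the (A v), v)) ` V'" by (auto simp: V'_def intro!: image_eqI[where x=v])
  next
    fix z assume "z \<in> (\<lambda>v. (the (A v), v)) ` V'"
    then obtain v u where z: "z = (u, v)" "v \<in> V" "A v = Some u" by (auto simp: V'_def)
    then show "z \<in> connects V A" using Ain[OF z(2) z(3)] by (auto simp: connects_def)
  qed
  have injc: "inj_on (\<lambda>v. (the (A v), v)) V'" by (rule inj_onI) simp
  have Dv: "Dval V w A = (\<Sum>v\<in>V'. \<bar>w (the (A v)) - w v\<bar> / 2)"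
    unfolding Dval_def conn sum.reindex[OF injc]
    by (simp add: sum_divide_distrib)
  have SSr: "phi V (round_step P A w) = (1/2) * (\<Sum>u\<in>V. \<Sum>v\<in>V. \<bar>round_step P A w u - round_step P A w v\<bar>)"
    by (rule phi_SS[OF finV])
  have SSw: "phi V w = (1/2) * (\<Sum>u\<in>V. \<Sum>v\<in>V. \<bar>w u - w v\<bar>)"
    by (rule phi_SS[OF finV])
  have "phi V (round_step P A w) \<le> phi V w - Dval V w A / 2"
    using step1 step2 step3 sumd sume Dv SSr SSw by linarith
  then show ?thesis using wr wr1 by simp
qed

end
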